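(* For any valid scheme (satisfying (C1)–(C8)) with $N\ge1$, $K\ge2$, \[ I\big(W_{2:K};Q_{1:N}^{[1,\mathcal{R}_U]},A_{1:N}^{[1,\mathcal{R}_U]},\mathcal{R}_S\,\big|\,W_1\big)\le D-L. \]
   Context: Model (SPIR with user-side common randomness). There are $N\ge1$ non-colluding databases, each storing the same $K\ge2$ messages $W_1,\dots,W_K$. Each message consists of $L$ i.i.d. symbols uniform over a sufficiently large finite field $\mathbb{F}_q$; entropies are in $q$-ary units, so $H(W_k)=L$ and $H(W_{1:K})=KL$. The databases share server-side common randomness $\mathcal{R}_S$, unknown to the user. The user holds user-side common randomness $\mathcal{R}_U$, a subset of the components of $\mathcal{R}_S$, unknown to the databases except for its size (uniform over subsets of given cardinality). $\mathcal{F}$ is the user's retrieval-strategy randomness. To retrieve $W_k$ the user sends $Q_n^{[k,\mathcal{R}_U]}$ to database $n$, receiving $A_n^{[k,\mathcal{R}_U]}$; $W_{\bar k}=\{W_j:j\ne k\}$. A valid scheme satisfies for all $k,n,\mathcal{R}_U$: (C1) $I(W_{1:K};k,\mathcal{F},\mathcal{R}_S,\mathcal{R}_U)=0$; (C2) $I(Q_{1:N}^{[k,\mathcal{R}_U]};W_{1:K},\mathcal{R}_S\setminus\mathcal{R}_U)=0$; (C3) $H(Q_{1:N}^{[k,\mathcal{R}_U]}\mid\mathcal{F})=0$; (C4) $H(A_n^{[k,\mathcal{R}_U]}\mid Q_n^{[k,\mathcal{R}_U]},W_{1:K},\mathcal{R}_S)=0$; (C5) $H(W_k\mid\mathcal{F},A_{1:N}^{[k,\mathcal{R}_U]},\mathcal{R}_U)=0$;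 (C6) user privacy: for all $k,k',n,\mathcal{R}_U$ there is $\mathcal{R}_U'$ with $H(\mathcal{R}_U')=H(\mathcal{R}_U)$ and $(Q_n^{[k,\mathcal{R}_U]},A_n^{[k,\mathcal{R}_U]},W_{1:K},\mathcal{R}_S)\sim(Q_n^{[k',\mathcal{R}_U']},A_n^{[k',\mathcal{R}_U']},W_{1:K},\mathcal{R}_S)$; (C7) $I(W_{\bar k};\mathcal{F},A_{1:N}^{[k,\mathcal{R}_U]},\mathcal{R}_U)=0$; (C8) $I(\mathcal{R}_S\setminus\mathcal{R}_U;\mathcal{F},A_{1:N}^{[k,\mathcal{R}_U]},W_k,\mathcal{R}_U)=0$. $D$ is the maximal total number of downloaded symbols (from all databases). *)

theory Defs
  imports "HOL-Probability.Probability"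
begin

abbreviation Ent :: "'a measure \<Rightarrow> real \<Rightarrow> ('a \<Rightarrow> 'b) \<Rightarrow> real" where
  "Ent M b X \<equiv> prob_space.entropy M b (count_space (X ` space M)) X"

abbreviation CEnt :: "'a measure \<Rightarrow> real \<Rightarrow> ('a \<Rightarrow> 'b) \<Rightarrow> ('a \<Rightarrow> 'c) \<Rightarrow> real" where
  "CEnt M b X Y \<equiv> prob_space.conditional_entropy M b
      (count_space (X ` space M)) (count_space (Y ` space M)) X Y"

abbreviation MI :: "'a measure \<Rightarrow> real \<Rightarrow> ('a \<Rightarrow> 'b) \<Rightarrow> ('a \<Rightarrow> 'c) \<Rightarrow> real" where
  "MI M b X Y \<equiv> prob_space.mutual_information M b
      (count_space (X ` space M)) (count_space (Y ` space M)) X Y"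

abbreviation CMI :: "'a measure \<Rightarrow> real \<Rightarrow> ('a \<Rightarrow> 'b) \<Rightarrow> ('a \<Rightarrow> 'c) \<Rightarrow> ('a \<Rightarrow> 'd) \<Rightarrow> real" where
  "CMI M b X Y Z \<equiv> prob_space.conditional_mutual_information M b
      (count_space (X ` space M)) (count_space (Y ` space M)) (count_space (Z ` space M)) X Y Z"

definition same_distr :: "'a measure \<Rightarrow> ('a \<Rightarrow> 'b) \<Rightarrow> ('a \<Rightarrow> 'b) \<Rightarrow> bool" where
  "same_distr M X Y \<longleftrightarrow>
     (\<forall>x. measure M {\<omega> \<in> space M. X \<omega> = x} = measure M {\<omega> \<in> space M. Y \<omega> = x})"

definition Ws :: "(nat \<Rightarrow> 'a \<Rightarrow> 'f list) \<Rightarrow> nat list \<Rightarrow> 'a \<Rightarrow> 'f list list" where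
  "Ws W ks \<omega> = map (\<lambda>k. W k \<omega>) ks"

definition Wall :: "nat \<Rightarrow> (nat \<Rightarrow> 'a \<Rightarrow> 'f list) \<Rightarrow> 'a \<Rightarrow> 'f list list" where
  "Wall K W = Ws W [1..<Suc K]"

definition Wbar :: "nat \<Rightarrow> (nat \<Rightarrow> 'a \<Rightarrow> 'f list) \<Rightarrow> nat \<Rightarrow> 'a \<Rightarrow> 'f list list" where
  "Wbar K W k = Ws W (filter (\<lambda>j. j \<noteq> k) [1..<Suc K])"

definition RV :: "('j \<Rightarrow> 'a \<Rightarrow> 'r) \<Rightarrow> 'j set \<Rightarrow> 'a \<Rightarrow> ('j \<Rightarrow> 'r)" where
  "RV Rs S \<omega> = restrict (\<lambda>j. Rs j \<omega>) S"

definition alldb :: "nat \<Rightarrow> (nat \<Rightarrow> 'a \<Rightarrow> 'b) \<Rightarrow> 'a \<Rightarrow> 'b list" where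
  "alldb N X \<omega> = map (\<lambda>n. X n \<omega>) [1..<Suc N]"

definition adm :: "'j set \<Rightarrow> nat \<Rightarrow> 'j set set" where
  "adm J m = {U. U \<subseteq> J \<and> card U = m}"

(* The probabilistic model: sample space M, entropies in q-ary units with q = |F_q|;
   F = strategy randomness; R_S has components Rs j, j \<in> J; R_U = RV Rs U for U \<in> adm J m;
   messages W 1..W K; queries Q k U n and answers A k U n for retrieving W_k
   with user-side randomness R_U = RV Rs U from database n. *)
definition spir_model ::
  "'a measure \<Rightarrow> nat \<Rightarrow> nat \<Rightarrow> nat \<Rightarrow> 'j set \<Rightarrow> nat \<Rightarrow> ('a \<Rightarrow> 'v) \<Rightarrow> ('j \<Rightarrow> 'a \<Rightarrow> 'r)
   \<Rightarrow> (nat \<Rightarrow> 'a \<Rightarrow> 'f::{finite,field} list)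
   \<Rightarrow> (nat \<Rightarrow> 'j set \<Rightarrow> nat \<Rightarrow> 'a \<Rightarrow> 'qv) \<Rightarrow> (nat \<Rightarrow> 'j set \<Rightarrow> nat \<Rightarrow> 'a \<Rightarrow> 'f list) \<Rightarrow> bool" where
  "spir_model M N K L J m F Rs W Q A \<longleftrightarrow>
     prob_space M \<and> finite J \<and>
     simple_function M F \<and> (\<forall>j\<in>J. simple_function M (Rs j)) \<and>
     (\<forall>k\<in>{1..K}. simple_function M (W k)) \<and>
     (\<forall>k\<in>{1..K}. \<forall>U\<in>adm J m. \<forall>n\<in>{1..N}.
        simple_function M (Q k U n) \<and> simple_function M (A k U n)) \<and>
     \<comment> \<open>messages: K L symbols i.i.d. uniform over F_q, i.e. W_{1:K} uniform\<close>
     (\<forall>ws. length ws = K \<and> (\<forall>w\<in>set ws. length w = L) \<longrightarrow>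
        measure M {\<omega> \<in> space M. Wall K W \<omega> = ws} = 1 / real CARD('f) ^ (K * L))"

definition valid_scheme ::
  "'a measure \<Rightarrow> nat \<Rightarrow> nat \<Rightarrow> 'j set \<Rightarrow> nat \<Rightarrow> ('a \<Rightarrow> 'v) \<Rightarrow> ('j \<Rightarrow> 'a \<Rightarrow> 'r)
   \<Rightarrow> (nat \<Rightarrow> 'a \<Rightarrow> 'f::{finite,field} list)
   \<Rightarrow> (nat \<Rightarrow> 'j set \<Rightarrow> nat \<Rightarrow> 'a \<Rightarrow> 'qv) \<Rightarrow> (nat \<Rightarrow> 'j set \<Rightarrow> nat \<Rightarrow> 'a \<Rightarrow> 'f list) \<Rightarrow> bool" where
  "valid_scheme M N K J m F Rs W Q A \<longleftrightarrow>
    (let q = real CARD('f); RS = RV Rs J in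
     \<comment> \<open>(C1)\<close>
     (\<forall>U\<in>adm J m. MI M q (Wall K W) (\<lambda>\<omega>. (F \<omega>, RS \<omega>, RV Rs U \<omega>)) = 0) \<and>
     (\<forall>k\<in>{1..K}. \<forall>U\<in>adm J m.
        \<comment> \<open>(C2)\<close>
        MI M q (alldb N (Q k U)) (\<lambda>\<omega>. (Wall K W \<omega>, RV Rs (J - U) \<omega>)) = 0 \<and>
        \<comment> \<open>(C3)\<close>
        CEnt M q (alldb N (Q k U)) F = 0 \<and>
        \<comment> \<open>(C4)\<close>
        (\<forall>n\<in>{1..N}. CEnt M q (A k U n) (\<lambda>\<omega>. (Q k U n \<omega>, Wall K W \<omega>, RS \<omega>)) = 0) \<and>
        \<comment> \<open>(C5)\<close>
        CEnt M q (W k) (\<lambda>\<omega>. (F \<omega>, alldb N (A k U) \<omega>, RV Rs U \<omega>)) = 0 \<and>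
        \<comment> \<open>(C6)\<close>
        (\<forall>k'\<in>{1..K}. \<forall>n\<in>{1..N}. \<exists>U'\<in>adm J m.
           Ent M q (RV Rs U') = Ent M q (RV Rs U) \<and>
           same_distr M (\<lambda>\<omega>. (Q k U n \<omega>, A k U n \<omega>, Wall K W \<omega>, RS \<omega>))
                        (\<lambda>\<omega>. (Q k' U' n \<omega>, A k' U' n \<omega>, Wall K W \<omega>, RS \<omega>))) \<and>
        \<comment> \<open>(C7)\<close>
        MI M q (Wbar K W k) (\<lambda>\<omega>. (F \<omega>, alldb N (A k U) \<omega>, RV Rs U \<omega>)) = 0 \<and>
        \<comment> \<open>(C8)\<close>
        MI M q (RV Rs (J - U)) (\<lambda>\<omega>. (F \<omega>, alldb N (A k U) \<omega>, W k \<omega>, RV Rs U \<omega>)) = 0))"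

end

theory Submission
  imports Defs
begin


context information_space
begin

abbreviation Pr :: "('a \<Rightarrow> 'b) \<Rightarrow> 'b \<Rightarrow> real" where
  "Pr V v \<equiv> prob (V -` {v} \<inter> space M)"

lemma ent_sum:
  assumes "simple_function M V"
  shows "\<H>(V) = - (\<Sum>v\<in>V`space M. Pr V v * log b (Pr V v))"
  using entropy_simple_distributed[OF simple_distributedI[OF assms measure_nonneg refl]] .

lemma marg:
  assumes V: "simple_function M V" and W: "\<And>\<omega>. Wv \<omega> = \<phi> (V \<omega>)"
  shows "(\<Sum>v\<in>V`space M. Pr V v * g (\<phi> v)) = (\<Sum>u\<in>Wv`space M. Pr Wv u * g u)"
proof -
  have fin: "finite (V`space M)" using V by (rule simple_functionD)
  have img: "Wv ` space M = \<phi> ` V ` space M" using W by (auto simp: image_image)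
  have "(\<Sum>v\<in>V`space M. Pr V v * g (\<phi> v)) =
     (\<Sum>u\<in>\<phi> ` V ` space M. \<Sum>v\<in>{v. v \<in> V`space M \<and> \<phi> v = u}. Pr V v * g (\<phi> v))"
    by (rule sum.image_gen[OF fin])
  also have "\<dots> = (\<Sum>u\<in>\<phi> ` V ` space M. Pr Wv u * g u)"
  proof (rule sum.cong[OF refl])
    fix u assume u: "u \<in> \<phi> ` V ` space M"
    have "(\<Sum>v\<in>{v. v \<in> V`space M \<and> \<phi> v = u}. Pr V v * g (\<phi> v)) =
          (\<Sum>v\<in>{v. v \<in> V`space M \<and> \<phi> v = u}. Pr V v) * g u"
      by (simp add: sum_distrib_right)
    also have "(\<Sum>v\<in>{v. v \<in> V`space M \<and> \<phi> v = u}. Pr V v) =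
        prob (\<Union>v\<in>{v. v \<in> V`space M \<and> \<phi> v = u}. V -` {v} \<inter> space M)"
      by (rule finite_measure_finite_Union[symmetric])
         (use fin V in \<open>auto simp: disjoint_family_on_def simple_functionD\<close>)
    also have "(\<Union>v\<in>{v. v \<in> V`space M \<and> \<phi> v = u}. V -` {v} \<inter> space M) = Wv -` {u} \<inter> space M"
      using W by auto
    finally show "(\<Sum>v\<in>{v. v \<in> V`space M \<and> \<phi> v = u}. Pr V v * g (\<phi> v)) = Pr Wv u * g u" .
  qed
  finally show ?thesis by (simp add: img)
qed

lemma Pr_mono:
  assumes V: "simple_function M V" and W: "simple_function M Wv"
    and "\<And>\<omega>. Wv \<omega> = \<phi> (V \<omega>)"
  shows "Pr V v \<le> Pr Wv (\<phi> v)"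
  by (rule finite_measure_mono) (use assms in \<open>auto simp: simple_functionD\<close>)

lemma cmi_ent:
  assumes X: "simple_function M X" and Y: "simple_function M Y" and Z: "simple_function M Z"
  shows "\<I>(X ; Y | Z) = \<H>(\<lambda>\<omega>. (X \<omega>, Z \<omega>)) + \<H>(\<lambda>\<omega>. (Y \<omega>, Z \<omega>))
      - \<H>(\<lambda>\<omega>. (X \<omega>, Y \<omega>, Z \<omega>)) - \<H>(Z)"
proof -
  let ?XZ = "\<lambda>\<omega>. (X \<omega>, Z \<omega>)" and ?YZ = "\<lambda>\<omega>. (Y \<omega>, Z \<omega>)" and ?V = "\<lambda>\<omega>. (X \<omega>, Y \<omega>, Z \<omega>)"
  have sXZ: "simple_function M ?XZ" using X Z by (rule simple_function_Pair)
  have sYZ: "simple_function M ?YZ" using Y Z by (rule simple_function_Pair)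
  have sV: "simple_function M ?V" using X simple_function_Pair[OF Y Z] by (rule simple_function_Pair)
  note sd = simple_distributedI[OF _ measure_nonneg refl]
  have "\<I>(X ; Y | Z) = (\<Sum>(x, y, z)\<in>?V`space M. Pr ?V (x,y,z) * log b (Pr ?V (x,y,z) / (Pr ?XZ (x, z) * (Pr ?YZ (y,z) / Pr Z z))))"
    by (rule conditional_mutual_information_eq[OF sd[OF Z] sd[OF sYZ] sd[OF sXZ] sd[OF sV]])
  also have "\<dots> = (\<Sum>v\<in>?V`space M. Pr ?V v * log b (Pr ?V v)
       - Pr ?V v * log b (Pr ?XZ ((\<lambda>(x,y,z). (x,z)) v))
       - Pr ?V v * log b (Pr ?YZ ((\<lambda>(x,y,z). (y,z)) v))
       + Pr ?V v * log b (Pr Z ((\<lambda>(x,y,z). z) v)))"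
  proof (rule sum.cong[OF refl])
    fix v assume v: "v \<in> ?V ` space M"
    obtain x y z where v_eq: "v = (x,y,z)" by (cases v) auto
    show "(case v of (x, y, z) \<Rightarrow> Pr ?V (x,y,z) * log b (Pr ?V (x,y,z) / (Pr ?XZ (x, z) * (Pr ?YZ (y,z) / Pr Z z)))) =
      Pr ?V v * log b (Pr ?V v) - Pr ?V v * log b (Pr ?XZ ((\<lambda>(x,y,z). (x,z)) v))
       - Pr ?V v * log b (Pr ?YZ ((\<lambda>(x,y,z). (y,z)) v)) + Pr ?V v * log b (Pr Z ((\<lambda>(x,y,z). z) v))"
    proof (cases "Pr ?V v = 0")
      case True then show ?thesis by (simp add: v_eq)
    next
      case False
      then have p: "0 < Pr ?V v" using measure_nonneg[of M] by (simp add: order_less_le)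
      have a: "Pr ?V v \<le> Pr ?XZ (x,z)"
        using Pr_mono[OF sV sXZ, of "\<lambda>(x,y,z). (x,z)" v] by (simp add: v_eq)
      have bb: "Pr ?V v \<le> Pr ?YZ (y,z)"
        using Pr_mono[OF sV sYZ, of "\<lambda>(x,y,z). (y,z)" v] by (simp add: v_eq)
      have c: "Pr ?V v \<le> Pr Z z"
        using Pr_mono[OF sV Z, of "\<lambda>(x,y,z). z" v] by (simp add: v_eq)
      have pa: "0 < Pr ?XZ (x,z)" "0 < Pr ?YZ (y,z)" "0 < Pr Z z" using a bb c p by linarith+
      have E: "log b (Pr ?V (x,y,z) / (Pr ?XZ (x, z) * (Pr ?YZ (y,z) / Pr Z z))) =
            log b (Pr ?V (x,y,z)) - log b (Pr ?XZ (x,z)) - log b (Pr ?YZ (y,z)) + log b (Pr Z z)"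
        using p pa by (simp add: log_divide log_mult v_eq)
      show ?thesis unfolding v_eq prod.case E by (simp add: algebra_simps)
    qed
  qed
  also have "\<dots> = (\<Sum>v\<in>?V`space M. Pr ?V v * log b (Pr ?V v))
       - (\<Sum>v\<in>?V`space M. Pr ?V v * log b (Pr ?XZ ((\<lambda>(x,y,z). (x,z)) v)))
       - (\<Sum>v\<in>?V`space M. Pr ?V v * log b (Pr ?YZ ((\<lambda>(x,y,z). (y,z)) v)))
       + (\<Sum>v\<in>?V`space M. Pr ?V v * log b (Pr Z ((\<lambda>(x,y,z). z) v)))"
    by (simp add: sum.distrib sum_subtractf)
  also have "(\<Sum>v\<in>?V`space M. Pr ?V v * log b (Pr ?XZ ((\<lambda>(x,y,z). (x,z)) v))) =
       (\<Sum>u\<in>?XZ`space M. Pr ?XZ u * log b (Pr ?XZ u))"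
    by (rule marg[OF sV, where g="\<lambda>u. log b (Pr ?XZ u)"]) simp
  also have "(\<Sum>v\<in>?V`space M. Pr ?V v * log b (Pr ?YZ ((\<lambda>(x,y,z). (y,z)) v))) =
       (\<Sum>u\<in>?YZ`space M. Pr ?YZ u * log b (Pr ?YZ u))"
    by (rule marg[OF sV, where g="\<lambda>u. log b (Pr ?YZ u)"]) simp
  also have "(\<Sum>v\<in>?V`space M. Pr ?V v * log b (Pr Z ((\<lambda>(x,y,z). z) v))) =
       (\<Sum>u\<in>Z`space M. Pr Z u * log b (Pr Z u))"
    by (rule marg[OF sV, where g="\<lambda>u. log b (Pr Z u)"]) simp
  finally show ?thesis
    by (simp add: ent_sum[OF sXZ] ent_sum[OF sYZ] ent_sum[OF sV] ent_sum[OF Z])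
qed

lemma ent_le_det:
  assumes X: "simple_function M X" and Y: "simple_function M Y"
    and det: "\<And>\<omega> \<omega>'. \<omega> \<in> space M \<Longrightarrow> \<omega>' \<in> space M \<Longrightarrow> X \<omega> = X \<omega>' \<Longrightarrow> Y \<omega> = Y \<omega>'"
  shows "\<H>(Y) \<le> \<H>(X)"
proof -
  define f where "f x = Y (SOME \<omega>. \<omega> \<in> space M \<and> X \<omega> = x)" for x
  have fx: "f (X \<omega>) = Y \<omega>" if "\<omega> \<in> space M" for \<omega>
  proof -
    have "\<exists>\<omega>'. \<omega>' \<in> space M \<and> X \<omega>' = X \<omega>" using that by blast
    then have "(SOME \<omega>'. \<omega>' \<in> space M \<and> X \<omega>' = X \<omega>) \<in> space M \<and> X (SOME \<omega>'. \<omega>' \<in> space M \<and> X \<omega>' = X \<omega>) = X \<omega>"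
      by (rule someI_ex)
    then show ?thesis unfolding f_def using det that by metis
  qed
  have sfX: "simple_function M (f \<circ> X)" using X by (rule simple_function_compose)
  have img: "(f \<circ> X) ` space M = Y ` space M" using fx by (force simp: image_iff)
  have pre: "(f \<circ> X) -` {y} \<inter> space M = Y -` {y} \<inter> space M" for y using fx by auto
  have "\<H>(Y) = \<H>(f \<circ> X)"
    apply (subst ent_sum[OF sfX])
    apply (subst ent_sum[OF Y])
    by (simp only: img pre)
  also have "\<dots> \<le> \<H>(X)" using X by (rule entropy_data_processing)
  finally show ?thesis .
qed

lemma ent_eq_det:
  assumes X: "simple_function M X" and Y: "simple_function M Y"
    and det: "\<And>\<omega> \<omega>'. \<omega> \<in> space M \<Longrightarrow> \<omega>' \<in> space M \<Longrightarrow> X \<omega> = X \<omega>' \<longleftrightarrow> Y \<omega> = Y \<omega>'"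
  shows "\<H>(Y) = \<H>(X)"
  using ent_le_det[OF X Y] ent_le_det[OF Y X] det by (meson order_antisym)

lemma cent_ent:
  assumes X: "simple_function M X" and Y: "simple_function M Y"
  shows "\<H>(X | Y) = \<H>(\<lambda>\<omega>. (Y \<omega>, X \<omega>)) - \<H>(Y)"
  using entropy_chain_rule[OF Y X] by simp

lemma mi_ent:
  assumes X: "simple_function M X" and Y: "simple_function M Y"
  shows "\<I>(X ; Y) = \<H>(X) + \<H>(Y) - \<H>(\<lambda>\<omega>. (X \<omega>, Y \<omega>))"
proof -
  have "\<H>(\<lambda>\<omega>. (Y \<omega>, X \<omega>)) = \<H>(\<lambda>\<omega>. (X \<omega>, Y \<omega>))"
    by (rule ent_eq_det) (auto intro: simple_function_Pair X Y)
  then show ?thesis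
    using mutual_information_eq_entropy_conditional_entropy[OF X Y] cent_ent[OF X Y] by simp
qed

lemma subadd:
  assumes X: "simple_function M X" and Y: "simple_function M Y"
  shows "\<H>(\<lambda>\<omega>. (X \<omega>, Y \<omega>)) \<le> \<H>(X) + \<H>(Y)"
  using mutual_information_nonneg_simple[OF X Y] mi_ent[OF X Y] by simp

lemma submod:
  assumes X: "simple_function M X" and Y: "simple_function M Y" and Z: "simple_function M Z"
  shows "\<H>(\<lambda>\<omega>. (X \<omega>, Y \<omega>, Z \<omega>)) + \<H>(Z) \<le> \<H>(\<lambda>\<omega>. (X \<omega>, Z \<omega>)) + \<H>(\<lambda>\<omega>. (Y \<omega>, Z \<omega>))"
  using conditional_mutual_information_nonneg[OF X Y Z] cmi_ent[OF X Y Z] by simp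

end


lemma sf_restrict:
  assumes "finite I" "\<And>i. i \<in> I \<Longrightarrow> simple_function M (g i)"
  shows "simple_function M (\<lambda>\<omega>. restrict (\<lambda>i. g i \<omega>) I)"
  using assms
proof (induction I rule: finite_induct)
  case empty
  then show ?case by (simp add: simple_function_def)
next
  case (insert j I)
  have eq: "(\<lambda>\<omega>. restrict (\<lambda>i. g i \<omega>) (insert j I)) =
      (\<lambda>(a, h). h(j := a)) \<circ> (\<lambda>\<omega>. (g j \<omega>, restrict (\<lambda>i. g i \<omega>) I))"
    using insert(2) by (auto simp: fun_eq_iff restrict_def)
  have "simple_function M (\<lambda>\<omega>. (g j \<omega>, restrict (\<lambda>i. g i \<omega>) I))"
    by (rule simple_function_Pair) (use insert in \<open>auto simp del: restrict_apply\<close>)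
  then show ?case unfolding eq by (rule simple_function_compose)
qed

lemma sf_maplist:
  assumes "\<And>i. i \<in> set ks \<Longrightarrow> simple_function M (g i)"
  shows "simple_function M (\<lambda>\<omega>. map (\<lambda>i. g i \<omega>) ks)"
proof -
  have eq: "(\<lambda>\<omega>. map (\<lambda>i. g i \<omega>) ks) = (\<lambda>h. map h ks) \<circ> (\<lambda>\<omega>. restrict (\<lambda>i. g i \<omega>) (set ks))"
    by (auto simp: fun_eq_iff)
  show ?thesis unfolding eq by (rule simple_function_compose, rule sf_restrict) (use assms in auto)
qed

lemma concat_inj: "map length xs = map length ys \<Longrightarrow> concat xs = concat ys \<Longrightarrow> xs = ys"
proof (induction xs arbitrary: ys)
  case Nil then show ?case by simp
next
  case (Cons x xs)
  then obtain y ys' where ys: "ys = y # ys'" by (cases ys) auto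
  with Cons.prems have "length x = length y" "x @ concat xs = y @ concat ys'" "map length xs = map length ys'"
    by auto
  then show ?case using Cons.IH ys by (auto simp: append_eq_append_conv)
qed

lemma card_field_ge2: "2 \<le> CARD('f::{finite,field})"
proof -
  have "card {0::'f, 1} = 2" by simp
  moreover have "card {0::'f, 1} \<le> CARD('f)" by (rule card_mono) auto
  ultimately show ?thesis by simp
qed



lemma Wall_Cons:
  assumes "1 \<le> K" shows "Wall K W \<omega> = W 1 \<omega> # Ws W [2..<Suc K] \<omega>"
proof -
  have h: "[1..<Suc K] = 1 # [Suc 1..<Suc K]" by (rule upt_conv_Cons) (use assms in simp)
  show ?thesis unfolding Wall_def Ws_def h by (simp only: list.map numeral_2_eq_2 One_nat_def)
qed

lemma W1_ent:
  fixes W :: "nat \<Rightarrow> 'a \<Rightarrow> 'f::{finite,field} list"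
  assumes IS: "information_space M (real CARD('f))" and K: "1 \<le> K"
    and sfW: "\<And>k. k \<in> {1..K} \<Longrightarrow> simple_function M (W k)"
    and unif: "\<forall>ws. length ws = K \<and> (\<forall>w\<in>set ws. length w = L) \<longrightarrow>
        measure M {\<omega> \<in> space M. Wall K W \<omega> = ws} = 1 / real CARD('f) ^ (K * L)"
  shows "real L \<le> Ent M (real CARD('f)) (W 1)"
proof -
  interpret information_space M "real CARD('f)" by (rule IS)
  define c where "c = real CARD('f)"
  have c1: "1 < c" using card_field_ge2[where 'f='f] by (simp add: c_def)
  define Ls where "Ls = {w::'f list. set w \<subseteq> UNIV \<and> length w = L}"
  define V where "V = {ws. set ws \<subseteq> Ls \<and> length ws = K}"
  define V' where "V' = {ws. set ws \<subseteq> Ls \<and> length ws = K - 1}"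
  have finLs: "finite Ls" unfolding Ls_def by (rule finite_lists_length_eq) simp
  have cLs: "card Ls = CARD('f) ^ L" unfolding Ls_def by (rule card_lists_length_eq) simp
  have finV: "finite V" unfolding V_def by (rule finite_lists_length_eq[OF finLs])
  have cV: "card V = CARD('f) ^ (K * L)" unfolding V_def
    by (simp add: card_lists_length_eq[OF finLs] cLs power_mult[symmetric] mult.commute)
  have finV': "finite V'" unfolding V'_def by (rule finite_lists_length_eq[OF finLs])
  have cV': "card V' = CARD('f) ^ ((K - 1) * L)" unfolding V'_def
    by (simp add: card_lists_length_eq[OF finLs] cLs power_mult[symmetric] mult.commute)
  define Wa where "Wa = Wall K W"
  have sfWa: "simple_function M Wa"
    unfolding Wa_def Wall_def Ws_def by (rule sf_maplist) (use sfW in auto)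
  have sfW1: "simple_function M (W 1)" using sfW K by auto
  have inV: "ws \<in> V \<longleftrightarrow> length ws = K \<and> (\<forall>w\<in>set ws. length w = L)" for ws
    by (auto simp: V_def Ls_def)
  have pV: "prob (Wa -` {ws} \<inter> space M) = 1 / c ^ (K * L)" if "ws \<in> V" for ws
  proof -
    have "Wa -` {ws} \<inter> space M = {\<omega> \<in> space M. Wall K W \<omega> = ws}" by (auto simp: Wa_def)
    then show ?thesis using unif that by (simp add: inV c_def)
  qed
  have "prob (\<Union>ws\<in>V. Wa -` {ws} \<inter> space M) = (\<Sum>ws\<in>V. prob (Wa -` {ws} \<inter> space M))"
    by (rule finite_measure_finite_Union) (use finV sfWa in \<open>auto simp: disjoint_family_on_def simple_functionD\<close>)
  also have "\<dots> = real (card V) * (1 / c ^ (K * L))" by (simp add: pV)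
  also have "\<dots> = 1" using c1 by (simp add: cV c_def)
  also have "(\<Union>ws\<in>V. Wa -` {ws} \<inter> space M) = Wa -` V \<inter> space M" by auto
  finally have p1: "prob (Wa -` V \<inter> space M) = 1" .
  have p0: "prob (space M - Wa -` V \<inter> space M) = 0"
    using prob_compl[of "Wa -` V \<inter> space M"] p1 sfWa by (simp add: simple_functionD Diff_Int_distrib2)
  have pw: "Pr (W 1) w \<le> 1 / c ^ L" for w
  proof -
    define S where "S = {r \<in> V'. w # r \<in> V}"
    have finS: "finite S" using finV' by (simp add: S_def)
    have cS: "card S \<le> card V'" by (rule card_mono[OF finV']) (auto simp: S_def)
    have sub: "W 1 -` {w} \<inter> space M \<subseteq> (space M - Wa -` V \<inter> space M) \<union> (\<Union>r\<in>S. Wa -` {w # r} \<inter> space M)"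
    proof
      fix \<omega> assume \<omega>: "\<omega> \<in> W 1 -` {w} \<inter> space M"
      show "\<omega> \<in> (space M - Wa -` V \<inter> space M) \<union> (\<Union>r\<in>S. Wa -` {w # r} \<inter> space M)"
      proof (cases "Wa \<omega> \<in> V")
        case True
        have eq: "Wa \<omega> = w # Ws W [2..<Suc K] \<omega>" unfolding Wa_def Wall_Cons[OF K] using \<omega> by simp
        have "Ws W [2..<Suc K] \<omega> \<in> S" using True K unfolding S_def V'_def V_def eq by (auto simp: Ws_def)
        then show ?thesis using \<omega> eq by auto
      qed (use \<omega> in auto)
    qed
    have "Pr (W 1) w \<le> prob ((space M - Wa -` V \<inter> space M) \<union> (\<Union>r\<in>S. Wa -` {w # r} \<inter> space M))"
      by (rule finite_measure_mono[OF sub]) (use finS sfWa in \<open>auto simp: simple_functionD\<close>)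
    also have "\<dots> \<le> prob (space M - Wa -` V \<inter> space M) + prob (\<Union>r\<in>S. Wa -` {w # r} \<inter> space M)"
      by (rule measure_Un_le) (use finS sfWa in \<open>auto simp: simple_functionD\<close>)
    also have "prob (\<Union>r\<in>S. Wa -` {w # r} \<inter> space M) \<le> (\<Sum>r\<in>S. prob (Wa -` {w # r} \<inter> space M))"
      by (rule finite_measure_subadditive_finite) (use finS sfWa in \<open>auto simp: simple_functionD\<close>)
    also have "\<dots> = real (card S) * (1 / c ^ (K * L))" by (simp add: pV S_def)
    also have "\<dots> \<le> real (card V') * (1 / c ^ (K * L))"
      using cS c1 by (intro mult_right_mono) auto
    also have "\<dots> = 1 / c ^ L"
    proof -
      have "K * L = (K - 1) * L + L" using K by (cases K) auto
      then have "c ^ (K * L) = c ^ ((K - 1) * L) * c ^ L" by (simp add: power_add)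
      then show ?thesis using c1 by (simp add: cV' c_def)
    qed
    finally show ?thesis using p0 by simp
  qed
  have sd: "simple_distributed M (W 1) (Pr (W 1))"
    by (rule simple_distributedI[OF sfW1 measure_nonneg refl])
  have "Ent M (real CARD('f)) (W 1) = (\<Sum>w\<in>W 1 ` space M. Pr (W 1) w * (- log c (Pr (W 1) w)))"
    unfolding ent_sum[OF sfW1] by (simp add: c_def sum_negf)
  also have "\<dots> \<ge> (\<Sum>w\<in>W 1 ` space M. Pr (W 1) w * real L)"
  proof (rule sum_mono)
    fix w assume "w \<in> W 1 ` space M"
    show "Pr (W 1) w * real L \<le> Pr (W 1) w * - log c (Pr (W 1) w)"
    proof (cases "Pr (W 1) w = 0")
      case False
      then have pos: "0 < Pr (W 1) w" using measure_nonneg[of M] by (simp add: order_less_le)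
      have "log c (Pr (W 1) w) \<le> log c (1 / c ^ L)"
        using pos pw[of w] c1 by (subst log_le_cancel_iff) auto
      also have "log c (1 / c ^ L) = - real L"
        using c1 by (simp add: log_divide log_nat_power)
      finally show ?thesis using pos by (intro mult_left_mono) auto
    qed simp
  qed
  also have "(\<Sum>w\<in>W 1 ` space M. Pr (W 1) w * real L) = real L"
    using simple_distributed_sum_space[OF sd] by (simp add: sum_distrib_right[symmetric])
  finally show ?thesis .
qed



theorem lemma1:
  fixes M :: "'a measure" and N K L m D :: nat and J :: "'j set"
    and F :: "'a \<Rightarrow> 'v" and Rs :: "'j \<Rightarrow> 'a \<Rightarrow> 'r"
    and W :: "nat \<Rightarrow> 'a \<Rightarrow> 'f::{finite,field} list"
    and Q :: "nat \<Rightarrow> 'j set \<Rightarrow> nat \<Rightarrow> 'a \<Rightarrow> 'qv"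
    and A :: "nat \<Rightarrow> 'j set \<Rightarrow> nat \<Rightarrow> 'a \<Rightarrow> 'f list"
  assumes "N \<ge> 1" and "K \<ge> 2"
    and model: "spir_model M N K L J m F Rs W Q A"
    and valid: "valid_scheme M N K J m F Rs W Q A"
    and answer_format: "\<exists>len. \<forall>k\<in>{1..K}. \<forall>U\<in>adm J m. \<forall>n\<in>{1..N}. \<forall>\<omega>\<in>space M.
                          length (A k U n \<omega>) = len n (Q k U n \<omega>)"
    and D_max: "\<forall>k\<in>{1..K}. \<forall>U\<in>adm J m. \<forall>\<omega>\<in>space M. (\<Sum>n=1..N. length (A k U n \<omega>)) \<le> D"
    and D_attained: "\<exists>k\<in>{1..K}. \<exists>U\<in>adm J m. \<exists>\<omega>\<in>space M. (\<Sum>n=1..N. length (A k U n \<omega>)) = D"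
    and U: "U \<in> adm J m"
  shows "CMI M (real CARD('f)) (Ws W [2..<Suc K])
           (\<lambda>\<omega>. (alldb N (Q 1 U) \<omega>, alldb N (A 1 U) \<omega>, RV Rs J \<omega>)) (W 1)
         \<le> real D - real L"
proof -
  have K1: "1 \<le> K" using assms(2) by simp
  have k1: "(1::nat) \<in> {1..K}" using K1 by simp
  have PS: "prob_space M" and finJ: "finite J" and sfF: "simple_function M F"
    and sfRs: "\<And>j. j \<in> J \<Longrightarrow> simple_function M (Rs j)"
    and sfW: "\<And>k. k \<in> {1..K} \<Longrightarrow> simple_function M (W k)"
    and sfQ: "\<And>n. n \<in> {1..N} \<Longrightarrow> simple_function M (Q 1 U n)"
    and sfA: "\<And>n. n \<in> {1..N} \<Longrightarrow> simple_function M (A 1 U n)"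
    and unif: "\<forall>ws. length ws = K \<and> (\<forall>w\<in>set ws. length w = L) \<longrightarrow>
        measure M {\<omega> \<in> space M. Wall K W \<omega> = ws} = 1 / real CARD('f) ^ (K * L)"
    using model U k1 unfolding spir_model_def by auto
  have q1: "1 < real CARD('f)" using card_field_ge2[where 'f='f] by simp
  interpret I: information_space M "real CARD('f)"
    by (rule information_space.intro[OF PS]) (unfold_locales, rule q1)
  have IS: "information_space M (real CARD('f))" by unfold_locales
  define W1 where "W1 = W 1"
  define Wr where "Wr = Ws W [2..<Suc K]"
  define Wa where "Wa = Wall K W"
  define Qv where "Qv = alldb N (Q 1 U)"
  define Av where "Av = alldb N (A 1 U)"
  define RS where "RS = RV Rs J"
  define RU where "RU = RV Rs U"
  have UJ: "U \<subseteq> J" using U by (simp add: adm_def)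
  have C1: "MI M (real CARD('f)) Wa (\<lambda>\<omega>. (F \<omega>, RS \<omega>, RU \<omega>)) = 0"
   and C3: "CEnt M (real CARD('f)) Qv F = 0"
   and C5: "CEnt M (real CARD('f)) W1 (\<lambda>\<omega>. (F \<omega>, Av \<omega>, RU \<omega>)) = 0"
    using valid U k1 unfolding valid_scheme_def Let_def Wa_def RS_def RU_def Qv_def Av_def W1_def
    by auto
  have sW1: "simple_function M W1" using sfW k1 by (simp add: W1_def)
  have sWr: "simple_function M Wr" unfolding Wr_def Ws_def
    by (rule sf_maplist) (use sfW in auto)
  have sWa: "simple_function M Wa" unfolding Wa_def Wall_def Ws_def
    by (rule sf_maplist) (use sfW in auto)
  have sQv: "simple_function M Qv" unfolding Qv_def alldb_def
    by (rule sf_maplist) (use sfQ in auto)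
  have sAv: "simple_function M Av" unfolding Av_def alldb_def
    by (rule sf_maplist) (use sfA in auto)
  have sRS: "simple_function M RS" unfolding RS_def RV_def
    by (rule sf_restrict[OF finJ sfRs])
  have sRU: "simple_function M RU" unfolding RU_def RV_def
    by (rule sf_restrict) (use finJ UJ sfRs in \<open>auto intro: finite_subset\<close>)
  note sfs = sW1 sWr sWa sQv sAv sRS sRU sfF
  note sP = simple_function_Pair
  have Wa_eq: "Wa \<omega> = W1 \<omega> # Wr \<omega>" for \<omega> unfolding Wa_def W1_def Wr_def using Wall_Cons[OF K1] .
  have RU_eq: "RU \<omega> = restrict (RS \<omega>) U" for \<omega>
    using UJ by (auto simp: RU_def RS_def RV_def fun_eq_iff restrict_def)

  let ?H = "Ent M (real CARD('f))"
  have s0: "CMI M (real CARD('f)) Wr (\<lambda>\<omega>. (Qv \<omega>, Av \<omega>, RS \<omega>)) W1 =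
     ?H (\<lambda>\<omega>. (Wr \<omega>, W1 \<omega>)) + ?H (\<lambda>\<omega>. ((Qv \<omega>, Av \<omega>, RS \<omega>), W1 \<omega>))
     - ?H (\<lambda>\<omega>. (Wr \<omega>, (Qv \<omega>, Av \<omega>, RS \<omega>), W1 \<omega>)) - ?H W1"
    by (rule I.cmi_ent; intro sP sfs)
  have s1: "?H (\<lambda>\<omega>. (F \<omega>, Wr \<omega>, (Qv \<omega>, Av \<omega>, RS \<omega>), W1 \<omega>)) + ?H (\<lambda>\<omega>. ((Qv \<omega>, Av \<omega>, RS \<omega>), W1 \<omega>))
     \<le> ?H (\<lambda>\<omega>. (F \<omega>, (Qv \<omega>, Av \<omega>, RS \<omega>), W1 \<omega>)) + ?H (\<lambda>\<omega>. (Wr \<omega>, (Qv \<omega>, Av \<omega>, RS \<omega>), W1 \<omega>))"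
    using I.submod[of F Wr "\<lambda>\<omega>. ((Qv \<omega>, Av \<omega>, RS \<omega>), W1 \<omega>)"] by (simp add: sP sfs)
  have s2: "?H (\<lambda>\<omega>. (Wa \<omega>, F \<omega>, RS \<omega>)) \<le> ?H (\<lambda>\<omega>. (F \<omega>, Wr \<omega>, (Qv \<omega>, Av \<omega>, RS \<omega>), W1 \<omega>))"
    by (rule I.ent_le_det; (intro sP sfs)?) (simp add: Wa_eq)
  have s3: "?H Wa + ?H (\<lambda>\<omega>. (F \<omega>, RS \<omega>, RU \<omega>)) - ?H (\<lambda>\<omega>. (Wa \<omega>, F \<omega>, RS \<omega>, RU \<omega>)) = 0"
    using C1 I.mi_ent[of Wa "\<lambda>\<omega>. (F \<omega>, RS \<omega>, RU \<omega>)"] by (simp add: sP sfs)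
  have s3a: "?H (\<lambda>\<omega>. (F \<omega>, RS \<omega>, RU \<omega>)) = ?H (\<lambda>\<omega>. (F \<omega>, RS \<omega>))"
    by (rule I.ent_eq_det; (intro sP sfs)?) (auto simp: RU_eq)
  have s3b: "?H (\<lambda>\<omega>. (Wa \<omega>, F \<omega>, RS \<omega>, RU \<omega>)) = ?H (\<lambda>\<omega>. (Wa \<omega>, F \<omega>, RS \<omega>))"
    by (rule I.ent_eq_det; (intro sP sfs)?) (auto simp: RU_eq)
  have s4: "?H (\<lambda>\<omega>. (Wr \<omega>, W1 \<omega>)) = ?H Wa"
    by (rule I.ent_eq_det; (intro sP sfs)?) (auto simp: Wa_eq)
  have s5: "?H (\<lambda>\<omega>. (W1 \<omega>, (Qv \<omega>, RS \<omega>), F \<omega>, Av \<omega>, RU \<omega>)) + ?H (\<lambda>\<omega>. (F \<omega>, Av \<omega>, RU \<omega>))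
     \<le> ?H (\<lambda>\<omega>. (W1 \<omega>, F \<omega>, Av \<omega>, RU \<omega>)) + ?H (\<lambda>\<omega>. ((Qv \<omega>, RS \<omega>), F \<omega>, Av \<omega>, RU \<omega>))"
    using I.submod[of W1 "\<lambda>\<omega>. (Qv \<omega>, RS \<omega>)" "\<lambda>\<omega>. (F \<omega>, Av \<omega>, RU \<omega>)"] by (simp add: sP sfs)
  have s5a: "?H (\<lambda>\<omega>. ((F \<omega>, Av \<omega>, RU \<omega>), W1 \<omega>)) - ?H (\<lambda>\<omega>. (F \<omega>, Av \<omega>, RU \<omega>)) = 0"
    using C5 I.cent_ent[of W1 "\<lambda>\<omega>. (F \<omega>, Av \<omega>, RU \<omega>)"] by (simp add: sP sfs)
  have s5b: "?H (\<lambda>\<omega>. (W1 \<omega>, F \<omega>, Av \<omega>, RU \<omega>)) = ?H (\<lambda>\<omega>. ((F \<omega>, Av \<omega>, RU \<omega>), W1 \<omega>))"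
    by (rule I.ent_eq_det; (intro sP sfs)?) auto
  have s5c: "?H (\<lambda>\<omega>. (F \<omega>, (Qv \<omega>, Av \<omega>, RS \<omega>), W1 \<omega>)) = ?H (\<lambda>\<omega>. (W1 \<omega>, (Qv \<omega>, RS \<omega>), F \<omega>, Av \<omega>, RU \<omega>))"
    by (rule I.ent_eq_det; (intro sP sfs)?) (auto simp: RU_eq)
  have s5d: "?H (\<lambda>\<omega>. ((Qv \<omega>, RS \<omega>), F \<omega>, Av \<omega>, RU \<omega>)) = ?H (\<lambda>\<omega>. (Av \<omega>, (F \<omega>, RS \<omega>), Qv \<omega>))"
    by (rule I.ent_eq_det; (intro sP sfs)?) (auto simp: RU_eq)
  have s6: "?H (\<lambda>\<omega>. (Av \<omega>, (F \<omega>, RS \<omega>), Qv \<omega>)) + ?H Qv \<le> ?H (\<lambda>\<omega>. (Av \<omega>, Qv \<omega>)) + ?H (\<lambda>\<omega>. ((F \<omega>, RS \<omega>), Qv \<omega>))"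
    using I.submod[of Av "\<lambda>\<omega>. (F \<omega>, RS \<omega>)" Qv] by (simp add: sP sfs)
  have s7: "?H (\<lambda>\<omega>. (Qv \<omega>, RS \<omega>, F \<omega>)) + ?H F \<le> ?H (\<lambda>\<omega>. (Qv \<omega>, F \<omega>)) + ?H (\<lambda>\<omega>. (RS \<omega>, F \<omega>))"
    using I.submod[of Qv RS F] by (simp add: sP sfs)
  have s7a: "?H (\<lambda>\<omega>. (F \<omega>, Qv \<omega>)) - ?H F = 0"
    using C3 I.cent_ent[of Qv F] by (simp add: sP sfs)
  have s7b: "?H (\<lambda>\<omega>. (Qv \<omega>, F \<omega>)) = ?H (\<lambda>\<omega>. (F \<omega>, Qv \<omega>))"
    by (rule I.ent_eq_det; (intro sP sfs)?) auto
  have s7c: "?H (\<lambda>\<omega>. ((F \<omega>, RS \<omega>), Qv \<omega>)) = ?H (\<lambda>\<omega>. (Qv \<omega>, RS \<omega>, F \<omega>))"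
    by (rule I.ent_eq_det; (intro sP sfs)?) auto
  have s7d: "?H (\<lambda>\<omega>. (RS \<omega>, F \<omega>)) = ?H (\<lambda>\<omega>. (F \<omega>, RS \<omega>))"
    by (rule I.ent_eq_det; (intro sP sfs)?) auto
  have s8: "?H (\<lambda>\<omega>. (Av \<omega>, Qv \<omega>)) \<le> ?H Qv + real D"
  proof -
    obtain len where len: "\<forall>k\<in>{1..K}. \<forall>U\<in>adm J m. \<forall>n\<in>{1..N}. \<forall>\<omega>\<in>space M.
                          length (A k U n \<omega>) = len n (Q k U n \<omega>)" using answer_format by blast
    have lenA: "length (A 1 U n \<omega>) = len n (Q 1 U n \<omega>)" if "n \<in> {1..N}" "\<omega> \<in> space M" for n \<omega>
      using len k1 U that by blast
    have mlen: "map length (Av \<omega>) = map (\<lambda>n. len n (Q 1 U n \<omega>)) [1..<Suc N]" if "\<omega> \<in> space M" for \<omega>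
      unfolding Av_def alldb_def using lenA that by (auto intro!: map_cong)
    have lenC: "length (concat (Av \<omega>)) \<le> D" if "\<omega> \<in> space M" for \<omega>
    proof -
      have "length (concat (Av \<omega>)) = (\<Sum>n\<in>set [1..<Suc N]. length (A 1 U n \<omega>))"
        unfolding Av_def alldb_def length_concat map_map comp_def sum_set_upt_conv_sum_list_nat ..
      also have "set [1..<Suc N] = {1..N}" by (simp only: set_upt atLeastLessThanSuc_atLeastAtMost)
      finally show ?thesis using D_max k1 U that by auto
    qed
    define Pd where "Pd \<omega> = concat (Av \<omega>) @ replicate (D - length (concat (Av \<omega>))) (0::'f)" for \<omega>
    have sPd: "simple_function M Pd"
    proof -
      have "Pd = (\<lambda>x. concat x @ replicate (D - length (concat x)) (0::'f)) \<circ> Av"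
        by (auto simp: Pd_def fun_eq_iff)
      then show ?thesis using sAv by simp
    qed
    have lPd: "length (Pd \<omega>) = D" if "\<omega> \<in> space M" for \<omega>
      using lenC[OF that] by (simp add: Pd_def)
    have tPd: "take (length (concat (Av \<omega>))) (Pd \<omega>) = concat (Av \<omega>)" for \<omega>
      by (simp add: Pd_def)
    have det: "((Av \<omega>, Qv \<omega>) = (Av \<omega>', Qv \<omega>')) = ((Qv \<omega>, Pd \<omega>) = (Qv \<omega>', Pd \<omega>'))"
      if w: "\<omega> \<in> space M" "\<omega>' \<in> space M" for \<omega> \<omega>'
      proof (rule iffI[rotated])
        assume h: "(Qv \<omega>, Pd \<omega>) = (Qv \<omega>', Pd \<omega>')"
        then have qe: "\<forall>n\<in>set [1..<Suc N]. Q 1 U n \<omega> = Q 1 U n \<omega>'"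
          by (simp only: Qv_def alldb_def map_eq_conv prod.inject) blast
        have ml: "map length (Av \<omega>) = map length (Av \<omega>')"
        proof -
          have "map length (Av \<omega>) = map (\<lambda>n. len n (Q 1 U n \<omega>)) [1..<Suc N]" by (rule mlen[OF w(1)])
          also have "\<dots> = map (\<lambda>n. len n (Q 1 U n \<omega>')) [1..<Suc N]"
            by (rule map_cong[OF refl]) (metis qe)
          also have "\<dots> = map length (Av \<omega>')" by (rule mlen[OF w(2), symmetric])
          finally show ?thesis .
        qed
        then have le: "length (concat (Av \<omega>)) = length (concat (Av \<omega>'))"
          by (simp only: length_concat)
        have pe: "Pd \<omega> = Pd \<omega>'" using h by simp
        have "concat (Av \<omega>) = take (length (concat (Av \<omega>))) (Pd \<omega>)" by (rule tPd[symmetric])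
        also have "\<dots> = take (length (concat (Av \<omega>'))) (Pd \<omega>')" by (simp only: le pe)
        also have "\<dots> = concat (Av \<omega>')" by (rule tPd)
        finally have "concat (Av \<omega>) = concat (Av \<omega>')" .
        then have "Av \<omega> = Av \<omega>'" using ml concat_inj by blast
        then show "(Av \<omega>, Qv \<omega>) = (Av \<omega>', Qv \<omega>')" using h by simp
      next
        assume "(Av \<omega>, Qv \<omega>) = (Av \<omega>', Qv \<omega>')"
        then show "(Qv \<omega>, Pd \<omega>) = (Qv \<omega>', Pd \<omega>')" by (simp add: Pd_def)
      qed
    have sAQ: "simple_function M (\<lambda>\<omega>. (Av \<omega>, Qv \<omega>))" by (intro sP sfs)
    have sQP: "simple_function M (\<lambda>\<omega>. (Qv \<omega>, Pd \<omega>))" by (intro sP sfs sPd)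
    have e1: "?H (\<lambda>\<omega>. (Qv \<omega>, Pd \<omega>)) = ?H (\<lambda>\<omega>. (Av \<omega>, Qv \<omega>))"
      by (rule I.ent_eq_det[OF sAQ sQP det])
    have e2: "?H (\<lambda>\<omega>. (Qv \<omega>, Pd \<omega>)) \<le> ?H Qv + ?H Pd"
      by (rule I.subadd[OF sQv sPd])
    have e3: "?H Pd \<le> log (real CARD('f)) (real (card (Pd ` space M)))"
      by (rule I.entropy_le_card[OF I.simple_distributedI[OF sPd measure_nonneg refl]])
    have sub: "Pd ` space M \<subseteq> {xs. set xs \<subseteq> (UNIV::'f set) \<and> length xs = D}" using lPd by auto
    have cardle: "card (Pd ` space M) \<le> CARD('f) ^ D"
    proof -
      have cl: "card {xs. set xs \<subseteq> (UNIV::'f set) \<and> length xs = D} = CARD('f)^D"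
        by (rule card_lists_length_eq) simp
      have fl: "finite {xs. set xs \<subseteq> (UNIV::'f set) \<and> length xs = D}"
        by (rule finite_lists_length_eq) simp
      show ?thesis using card_mono[OF fl sub] cl by simp
    qed
    have ne: "space M \<noteq> {}" using I.not_empty .
    have cpos: "0 < card (Pd ` space M)"
      using ne finite_subset[OF sub finite_lists_length_eq[of "UNIV::'f set" D]] by (simp add: card_gt_0_iff)
    have "log (real CARD('f)) (real (card (Pd ` space M))) \<le> log (real CARD('f)) (real CARD('f) ^ D)"
      using cpos cardle q1 by (subst log_le_cancel_iff) (auto simp flip: of_nat_power)
    also have "\<dots> = real D" using q1 by (simp add: log_nat_power)
    finally show ?thesis using e1 e2 e3 by linarith
  qed
  have s9: "real L \<le> ?H W1"
    unfolding W1_def by (rule W1_ent[OF IS K1 sfW unif])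
  have main: "CMI M (real CARD('f)) Wr (\<lambda>\<omega>. (Qv \<omega>, Av \<omega>, RS \<omega>)) W1 \<le> real D - real L"
    using s0 s1 s2 s3 s3a s3b s4 s5 s5a s5b s5c s5d s6 s7 s7a s7b s7c s7d s8 s9 by linarith
  then show ?thesis by (simp add: W1_def Wr_def Qv_def Av_def RS_def)
qed


end
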